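(* A triple $x=(x_1,x_2,x_3)$ of distinct points of $\partial H^n_{\mathbb{H}}$ lies in the ideal boundary of a quaternionic line ($\mathbb{H}$-line) of $H^n_{\mathbb{H}}$ if and only if $\mathbb{A}_{\mathbb{H}}(x)=\pi/2$.
   Context: $H^n_{\mathbb{H}}$ is the set of negative lines in the left $\mathbb{H}$-vector space $\mathbb{H}^{n+1}$ with Hermitian form $\langle z,w\rangle=\sum_{i=1}^n z_i\bar w_i-z_{n+1}\bar w_{n+1}$, and $\partial H^n_{\mathbb{H}}$ the set of null lines. An $\mathbb{H}$-line is a totally geodesic copy of $H^1_{\mathbb{H}}$ (projectivization of a 2-dimensional $\mathbb{H}$-subspace of signature $(1,1)$). For distinct points with lifts $\tilde x_i$, the triple product is $\langle\tilde x_1,\tilde x_2\rangle\langle\tilde x_2,\tilde x_3\rangle\langle\tilde x_3,\tilde x_1\rangle\in\mathbb{H}$, and $\mathbb{A}_{\mathbb{H}}(x)\in[0,\pi/2]$ is the angle in $\mathbb{H}\cong\mathbb{R}^4$ between $\mathbb{R}\cdot1$ and the triple product. *)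

theory Defs
  imports Complex_Main
begin

datatype quat = Quat (qre: real) (qi: real) (qj: real) (qk: real)

instantiation quat :: ab_group_add
begin
definition "0 = Quat 0 0 0 0"
definition "a + b = Quat (qre a + qre b) (qi a + qi b) (qj a + qj b) (qk a + qk b)"
definition "- a = Quat (- qre a) (- qi a) (- qj a) (- qk a)"
definition "a - b = Quat (qre a - qre b) (qi a - qi b) (qj a - qj b) (qk a - qk b)"
instance
  by standard (auto simp: zero_quat_def plus_quat_def uminus_quat_def minus_quat_def)
end

instantiation quat :: "{times, one}"
begin
definition "1 = Quat 1 0 0 0"

definition "a * b = Quat
   (qre a * qre b - qi a * qi b - qj a * qj b - qk a * qk b)
   (qre a * qi b + qi a * qre b + qj a * qk b - qk a * qj b)
   (qre a * qj b - qi a * qk b + qj a * qre b + qk a * qi b)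
   (qre a * qk b + qi a * qj b - qj a * qi b + qk a * qre b)"
instance ..
end

definition qcnj :: "quat \<Rightarrow> quat" where
  "qcnj a = Quat (qre a) (- qi a) (- qj a) (- qk a)"

definition qnorm :: "quat \<Rightarrow> real" where
  "qnorm a = sqrt ((qre a)\<^sup>2 + (qi a)\<^sup>2 + (qj a)\<^sup>2 + (qk a)\<^sup>2)"

text \<open>Angle in \<open>\<HH> \<cong> \<real>\<^sup>4\<close> between the real line \<open>\<real>\<cdot>1\<close> and a nonzero quaternion,
  a value in \<open>[0, pi/2]\<close>.\<close>
definition angle_real_line :: "quat \<Rightarrow> real" where
  "angle_real_line q = arccos (\<bar>qre q\<bar> / qnorm q)"

text \<open>Vectors of \<open>\<HH>\<^sup>n\<^sup>+\<^sup>1\<close> are functions \<open>nat \<Rightarrow> quat\<close>; only the coordinates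
  \<open>1..n+1\<close> are relevant.\<close>

definition herm :: "nat \<Rightarrow> (nat \<Rightarrow> quat) \<Rightarrow> (nat \<Rightarrow> quat) \<Rightarrow> quat" where
  "herm n z w = (\<Sum>i=1..n. z i * qcnj (w i)) - z (n+1) * qcnj (w (n+1))"

definition nonzero_vec :: "nat \<Rightarrow> (nat \<Rightarrow> quat) \<Rightarrow> bool" where
  "nonzero_vec n z \<longleftrightarrow> (\<exists>i\<in>{1..n+1}. z i \<noteq> 0)"

text \<open>\<open>z\<close> is a lift of a point of \<open>\<partial>H\<^sup>n_\<HH>\<close> (a null line).\<close>
definition null_vec :: "nat \<Rightarrow> (nat \<Rightarrow> quat) \<Rightarrow> bool" where
  "null_vec n z \<longleftrightarrow> nonzero_vec n z \<and> herm n z z = 0"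

definition same_line :: "nat \<Rightarrow> (nat \<Rightarrow> quat) \<Rightarrow> (nat \<Rightarrow> quat) \<Rightarrow> bool" where
  "same_line n z w \<longleftrightarrow> (\<exists>c. \<forall>i\<in>{1..n+1}. z i = c * w i)"

definition in_lspan :: "nat \<Rightarrow> (nat \<Rightarrow> quat) \<Rightarrow> (nat \<Rightarrow> quat) \<Rightarrow> (nat \<Rightarrow> quat) \<Rightarrow> bool" where
  "in_lspan n u v z \<longleftrightarrow> (\<exists>a b. \<forall>i\<in>{1..n+1}. z i = a * u i + b * v i)"

text \<open>\<open>u, v\<close> is an orthonormal basis of signature (1,1) of a 2-dimensional
  \<HH>-subspace; the \<HH>-lines of \<open>H\<^sup>n_\<HH>\<close> are exactly the projectivizations of the spans of
  such pairs, and the ideal boundary of that \<HH>-line consists of the null lines in the span.\<close>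
definition hline_basis :: "nat \<Rightarrow> (nat \<Rightarrow> quat) \<Rightarrow> (nat \<Rightarrow> quat) \<Rightarrow> bool" where
  "hline_basis n u v \<longleftrightarrow> herm n u u = 1 \<and> herm n v v = - 1 \<and> herm n u v = 0"

definition triple_product :: "nat \<Rightarrow> (nat \<Rightarrow> quat) \<Rightarrow> (nat \<Rightarrow> quat) \<Rightarrow> (nat \<Rightarrow> quat) \<Rightarrow> quat" where
  "triple_product n x1 x2 x3 = herm n x1 x2 * herm n x2 x3 * herm n x3 x1"

definition quat_angular_inv :: "nat \<Rightarrow> (nat \<Rightarrow> quat) \<Rightarrow> (nat \<Rightarrow> quat) \<Rightarrow> (nat \<Rightarrow> quat) \<Rightarrow> real" where
  "quat_angular_inv n x1 x2 x3 = angle_real_line (triple_product n x1 x2 x3)"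

end

theory Submission
  imports Defs
begin

lemma quat_eqI: "qre a = qre b \<Longrightarrow> qi a = qi b \<Longrightarrow> qj a = qj b \<Longrightarrow> qk a = qk b \<Longrightarrow> a = b"
  by (cases a; cases b) auto

lemma quat_comps[simp]:
  "qre 0 = 0" "qi 0 = 0" "qj 0 = 0" "qk 0 = 0"
  "qre 1 = 1" "qi 1 = 0" "qj 1 = 0" "qk 1 = 0"
  "qre (a + b) = qre a + qre b" "qi (a + b) = qi a + qi b" "qj (a + b) = qj a + qj b" "qk (a + b) = qk a + qk b"
  "qre (a - b) = qre a - qre b" "qi (a - b) = qi a - qi b" "qj (a - b) = qj a - qj b" "qk (a - b) = qk a - qk b"
  "qre (- a) = - qre a" "qi (- a) = - qi a" "qj (- a) = - qj a" "qk (- a) = - qk a"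
  by (simp_all add: zero_quat_def one_quat_def plus_quat_def minus_quat_def uminus_quat_def)

lemma quat_mult_comps[simp]:
  "qre (a * b) = qre a * qre b - qi a * qi b - qj a * qj b - qk a * qk b"
  "qi (a * b) = qre a * qi b + qi a * qre b + qj a * qk b - qk a * qj b"
  "qj (a * b) = qre a * qj b - qi a * qk b + qj a * qre b + qk a * qi b"
  "qk (a * b) = qre a * qk b + qi a * qj b - qj a * qi b + qk a * qre b"
  by (simp_all add: times_quat_def)

instance quat :: ring_1
proof
  fix a b c :: quat
  show "a * b * c = a * (b * c)" by (rule quat_eqI) (simp_all add: algebra_simps)
  show "(a + b) * c = a * c + b * c" by (rule quat_eqI) (simp_all add: algebra_simps)
  show "a * (b + c) = a * b + a * c" by (rule quat_eqI) (simp_all add: algebra_simps)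
  show "1 * a = a" by (rule quat_eqI) simp_all
  show "a * 1 = a" by (rule quat_eqI) simp_all
  show "(0::quat) \<noteq> 1" by (metis quat_comps(1,5) zero_neq_one)
qed

definition R :: "real \<Rightarrow> quat" where "R r = Quat r 0 0 0"
definition nsq :: "quat \<Rightarrow> real" where "nsq a = (qre a)\<^sup>2 + (qi a)\<^sup>2 + (qj a)\<^sup>2 + (qk a)\<^sup>2"
definition qinv :: "quat \<Rightarrow> quat" where "qinv a = R (1 / nsq a) * qcnj a"

lemma R_comps[simp]: "qre (R r) = r" "qi (R r) = 0" "qj (R r) = 0" "qk (R r) = 0"
  by (simp_all add: R_def)
lemma cnj_comps[simp]: "qre (qcnj a) = qre a" "qi (qcnj a) = - qi a" "qj (qcnj a) = - qj a" "qk (qcnj a) = - qk a"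
  by (simp_all add: qcnj_def)

lemma R_comm: "R r * q = q * R r" by (rule quat_eqI) simp_all
lemma R_mult: "R r * R s = R (r * s)" by (rule quat_eqI) simp_all
lemma R_add: "R r + R s = R (r + s)" by (rule quat_eqI) simp_all
lemma R_1[simp]: "R 1 = 1" by (rule quat_eqI) simp_all
lemma R_0[simp]: "R 0 = 0" by (rule quat_eqI) simp_all
lemma R_minus: "- R r = R (- r)" by (rule quat_eqI) simp_all
lemma qre_R_mult: "qre (R r * q) = r * qre q" by simp
lemma cnj_mult: "qcnj (a * b) = qcnj b * qcnj a" by (rule quat_eqI) (simp_all add: algebra_simps)
lemma cnj_add: "qcnj (a + b) = qcnj a + qcnj b" by (rule quat_eqI) simp_all
lemma cnj_diff: "qcnj (a - b) = qcnj a - qcnj b" by (rule quat_eqI) simp_all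
lemma cnj_minus: "qcnj (- a) = - qcnj a" by (rule quat_eqI) simp_all
lemma cnj_cnj[simp]: "qcnj (qcnj a) = a" by (rule quat_eqI) simp_all
lemma cnj_R[simp]: "qcnj (R r) = R r" by (rule quat_eqI) simp_all
lemma cnj_0[simp]: "qcnj 0 = 0" by (rule quat_eqI) simp_all
lemma cnj_1[simp]: "qcnj 1 = 1" by (rule quat_eqI) simp_all
lemma mult_cnj: "a * qcnj a = R (nsq a)" by (rule quat_eqI) (simp_all add: nsq_def power2_eq_square algebra_simps)
lemma cnj_mult_self: "qcnj a * a = R (nsq a)" by (rule quat_eqI) (simp_all add: nsq_def power2_eq_square algebra_simps)
lemma qre_comm: "qre (a * b) = qre (b * a)" by (simp add: algebra_simps)
lemma qre_cnj: "qre (qcnj a) = qre a" by simp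
lemma nsq_ge0: "nsq a \<ge> 0" by (simp add: nsq_def)
lemma nsq_0_iff: "nsq a = 0 \<longleftrightarrow> a = 0"
proof
  assume "nsq a = 0"
  then have "qre a = 0 \<and> qi a = 0 \<and> qj a = 0 \<and> qk a = 0"
    unfolding nsq_def by (smt (verit) zero_le_power2 power_eq_0_iff)
  then show "a = 0" by (intro quat_eqI) auto
qed (simp add: nsq_def)
lemma nsq_mult: "nsq (a * b) = nsq a * nsq b"
  unfolding nsq_def quat_mult_comps by algebra
lemma nsq_cnj: "nsq (qcnj a) = nsq a" by (simp add: nsq_def)
lemma no_zd: "(a::quat) * b = 0 \<Longrightarrow> a = 0 \<or> b = 0"
proof -
  assume "a * b = 0"
  then have "nsq a * nsq b = 0" by (metis nsq_mult nsq_0_iff)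
  then show ?thesis by (simp add: nsq_0_iff)
qed
lemma qinv_l: "a \<noteq> 0 \<Longrightarrow> qinv a * a = 1"
  unfolding qinv_def by (simp add: mult.assoc cnj_mult_self R_mult nsq_0_iff)
lemma qinv_r: "a \<noteq> 0 \<Longrightarrow> a * qinv a = 1"
proof -
  assume "a \<noteq> 0"
  then have "nsq a \<noteq> 0" by (simp add: nsq_0_iff)
  have "a * qinv a = R (1 / nsq a) * (a * qcnj a)" unfolding qinv_def
    by (metis R_comm mult.assoc)
  also have "\<dots> = 1" using \<open>nsq a \<noteq> 0\<close> by (simp add: mult_cnj R_mult)
  finally show ?thesis .
qed
lemma R_inj: "R r = R s \<longleftrightarrow> r = s" by (metis R_comps(1))
lemma R_eq_0: "R r = 0 \<longleftrightarrow> r = 0" by (metis R_0 R_inj)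


lemma cnj_sum: "qcnj (sum f A) = (\<Sum>i\<in>A. qcnj (f i))"
  by (induct A rule: infinite_finite_induct) (simp_all add: cnj_add)
lemma qre_sum: "qre (sum f A) = (\<Sum>i\<in>A. qre (f i))"
  by (induct A rule: infinite_finite_induct) simp_all
lemma qi_sum: "qi (sum f A) = (\<Sum>i\<in>A. qi (f i))"
  by (induct A rule: infinite_finite_induct) simp_all
lemma qj_sum: "qj (sum f A) = (\<Sum>i\<in>A. qj (f i))"
  by (induct A rule: infinite_finite_induct) simp_all
lemma qk_sum: "qk (sum f A) = (\<Sum>i\<in>A. qk (f i))"
  by (induct A rule: infinite_finite_induct) simp_all

definition vlin :: "quat \<Rightarrow> (nat \<Rightarrow> quat) \<Rightarrow> quat \<Rightarrow> (nat \<Rightarrow> quat) \<Rightarrow> (nat \<Rightarrow> quat)" where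
  "vlin a z b w = (\<lambda>i. a * z i + b * w i)"

lemma herm_lin_left: "herm n (vlin a z b w) y = a * herm n z y + b * herm n w y"
  unfolding herm_def vlin_def
  by (simp add: algebra_simps sum.distrib sum_distrib_left)

lemma herm_conj: "herm n w z = qcnj (herm n z w)"
  unfolding herm_def by (simp add: cnj_diff cnj_sum cnj_mult)

lemma herm_lin_right: "herm n y (vlin a z b w) = herm n y z * qcnj a + herm n y w * qcnj b"
  by (metis herm_conj herm_lin_left cnj_add cnj_mult)

lemma herm_cong_left: "(\<forall>i\<in>{1..n+1}. z i = z' i) \<Longrightarrow> herm n z y = herm n z' y"
  unfolding herm_def by (intro arg_cong2[where f="(-)"] arg_cong2[where f="(*)"] sum.cong) auto
lemma herm_cong_right: "(\<forall>i\<in>{1..n+1}. z i = z' i) \<Longrightarrow> herm n y z = herm n y z'"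
  unfolding herm_def by (intro arg_cong2[where f="(-)"] arg_cong2[where f="(*)"] arg_cong[where f=qcnj] sum.cong) auto

lemma herm_self_real: "herm n z z = R (qre (herm n z z))"
proof -
  have e: "herm n z z = qcnj (herm n z z)" by (rule herm_conj)
  have "qi (herm n z z) = - qi (herm n z z)" "qj (herm n z z) = - qj (herm n z z)" "qk (herm n z z) = - qk (herm n z z)"
    using arg_cong[OF e, of qi] arg_cong[OF e, of qj] arg_cong[OF e, of qk] by simp_all
  then have "qi (herm n z z) = 0" "qj (herm n z z) = 0" "qk (herm n z z) = 0" by linarith+
  then show ?thesis by (intro quat_eqI) simp_all
qed

lemma qre_herm_self: "qre (herm n z z) = (\<Sum>i=1..n. nsq (z i)) - nsq (z (n+1))"
  unfolding herm_def by (simp add: qre_sum mult_cnj)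

lemma herm_zero_left: "herm n (\<lambda>i. 0) y = 0" unfolding herm_def by simp


lemma last_zero_vanish:
  assumes "z (n+1) = 0" "herm n z z = 0"
  shows "\<forall>i\<in>{1..n+1}. z i = 0"
proof
  fix i assume i: "i \<in> {1..n+1}"
  have "(\<Sum>i=1..n. nsq (z i)) = 0"
    using qre_herm_self[of n z] assms by (simp add: nsq_def)
  then have "\<forall>i\<in>{1..n}. nsq (z i) = 0"
    by (subst (asm) sum_nonneg_eq_0_iff) (auto simp: nsq_ge0)
  then show "z i = 0" using i assms(1) nsq_0_iff
    by (cases "i = n+1") auto
qed

lemma null_last_nz:
  assumes "null_vec n x" shows "x (n+1) \<noteq> 0"
proof
  assume "x (n+1) = 0"
  then have "\<forall>i\<in>{1..n+1}. x i = 0" using assms last_zero_vanish unfolding null_vec_def by blast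
  then show False using assms unfolding null_vec_def nonzero_vec_def by blast
qed

lemma L1:
  assumes "null_vec n x" "herm n w x = 0" "herm n w w = 0"
  shows "\<exists>l. \<forall>i\<in>{1..n+1}. w i = l * x i"
proof -
  define t where "t = x (n+1)"
  have t: "t \<noteq> 0" using null_last_nz[OF assms(1)] t_def by simp
  define l where "l = w (n+1) * qinv t"
  define z where "z = vlin 1 w (-l) x"
  have hxx: "herm n x x = 0" using assms(1) null_vec_def by blast
  have hxw: "herm n x w = 0" using herm_conj[of n x w] assms(2) by simp
  have hwz: "herm n w z = 0" unfolding z_def herm_lin_right using assms by simp
  have hxz: "herm n x z = 0" unfolding z_def herm_lin_right using hxx hxw by simp
  have hzz: "herm n z z = 0" unfolding z_def herm_lin_left
    using hwz[unfolded z_def] hxz[unfolded z_def] by simp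
  have zl: "z (n+1) = 0" unfolding z_def vlin_def l_def using qinv_l[OF t]
    by (simp add: t_def mult.assoc)
  have "\<forall>i\<in>{1..n+1}. z i = 0" using last_zero_vanish[OF zl hzz] .
  then show ?thesis unfolding z_def vlin_def by (intro exI[of _ l]) auto
qed

lemma L2:
  assumes "null_vec n x1" "null_vec n x2" "\<not> same_line n x1 x2"
  shows "herm n x1 x2 \<noteq> 0"
proof
  assume h: "herm n x1 x2 = 0"
  have "herm n x2 x1 = 0" using herm_conj[of n x2 x1] h by simp
  moreover have "herm n x2 x2 = 0" using assms(2) null_vec_def by blast
  ultimately obtain l where l: "\<forall>i\<in>{1..n+1}. x2 i = l * x1 i" using L1[OF assms(1)] by blast
  have "l \<noteq> 0"
  proof
    assume "l = 0" then show False using l assms(2) unfolding null_vec_def nonzero_vec_def by auto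
  qed
  then have "\<forall>i\<in>{1..n+1}. x1 i = qinv l * x2 i" using l qinv_l by (simp add: mult.assoc[symmetric])
  then show False using assms(3) unfolding same_line_def by blast
qed


lemma proj:
  assumes n1: "herm n x1 x1 = 0" and n2: "herm n x2 x2 = 0" and n3: "herm n x3 x3 = 0"
    and N: "N = nsq (herm n x1 x2)"
    and w: "w = vlin (R N) x3 1 (vlin (-(herm n x3 x2 * herm n x2 x1)) x1 (-(herm n x3 x1 * herm n x1 x2)) x2)"
  shows "herm n w x1 = 0" "herm n w x2 = 0" "qre (herm n w w) = -2 * N * qre (triple_product n x1 x2 x3)"
proof -
  define h12 where "h12 = herm n x1 x2"
  define h23 where "h23 = herm n x2 x3"
  define h31 where "h31 = herm n x3 x1"
  have h21: "herm n x2 x1 = qcnj h12" using herm_conj h12_def by metis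
  have h32: "herm n x3 x2 = qcnj h23" using herm_conj h23_def by metis
  have h13: "herm n x1 x3 = qcnj h31" using herm_conj h31_def by metis
  have c1: "h12 * qcnj h12 = R N" using N h12_def mult_cnj by simp
  have c2: "qcnj h12 * h12 = R N" using N h12_def cnj_mult_self by simp
  define v where "v = vlin (-(qcnj h23 * qcnj h12)) x1 (-(h31 * h12)) x2"
  have w': "w = vlin (R N) x3 1 v" using w v_def h21 h32 h12_def h31_def by simp
  have "herm n w x1 = R N * h31 + (-(qcnj h23 * qcnj h12) * 0 + -(h31 * h12) * qcnj h12)"
    unfolding w' v_def herm_lin_left using n1 h21 h31_def by simp
  also have "\<dots> = R N * h31 - h31 * R N" using c1 by (simp add: mult.assoc)
  also have "\<dots> = 0" using R_comm by simp
  finally show A: "herm n w x1 = 0" .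
  have "herm n w x2 = R N * qcnj h23 + (-(qcnj h23 * qcnj h12) * h12 + -(h31 * h12) * 0)"
    unfolding w' v_def herm_lin_left using n2 h32 h12_def by simp
  also have "\<dots> = R N * qcnj h23 - qcnj h23 * R N" using c2 by (simp add: mult.assoc)
  also have "\<dots> = 0" using R_comm by simp
  finally show B: "herm n w x2 = 0" .
  have "herm n v w = 0" unfolding v_def herm_lin_left
    using A B herm_conj[of n x1 w] herm_conj[of n x2 w] by simp
  then have "herm n w w = R N * herm n x3 w" unfolding w'[of ] herm_lin_left
    by (simp add: w'[symmetric])
  also have "herm n x3 w = herm n x3 v" unfolding w' herm_lin_right using n3 by simp
  also have "herm n x3 v = - (h31 * (h12 * h23)) - qcnj h23 * (qcnj h12 * qcnj h31)"
    unfolding v_def herm_lin_right using h31_def h32 by (simp add: cnj_mult cnj_minus mult.assoc)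
  finally have "herm n w w = R N * (- (h31 * (h12 * h23)) - qcnj h23 * (qcnj h12 * qcnj h31))" .
  then have X: "qre (herm n w w) = N * (- qre (h31 * (h12 * h23)) - qre (qcnj (h31 * (h12 * h23))))"
    by (simp only: qre_R_mult cnj_mult mult.assoc quat_comps)
  have eqT: "qre (h31 * (h12 * h23)) = qre (triple_product n x1 x2 x3)"
    unfolding triple_product_def h12_def h23_def h31_def by (metis qre_comm mult.assoc)
  have "qre (herm n w w) = N * (- qre (triple_product n x1 x2 x3) - qre (triple_product n x1 x2 x3))"
    using X by (simp only: qre_cnj eqT)
  then show "qre (herm n w w) = -2 * N * qre (triple_product n x1 x2 x3)"
    by (simp add: algebra_simps)
qed


lemma herm1: "herm 1 Z Y = Z 1 * qcnj (Y 1) - Z 2 * qcnj (Y 2)"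
  unfolding herm_def by (simp add: numeral_2_eq_2)

lemma herm_smul_left: "herm n (\<lambda>i. l * z i) y = l * herm n z y"
  using herm_lin_left[of n l z 0 z y] unfolding vlin_def by simp

lemma L3:
  assumes X: "null_vec 1 X" and W: "herm 1 W X = 0"
  shows "\<exists>l. \<forall>i\<in>{1..1+1}. W i = l * X i"
proof -
  define a b c d where "a = X 1" "b = X 2" "c = W 1" "d = W 2"
  have b0: "b \<noteq> 0" using null_last_nz[OF X] a_b_c_d_def by (simp add: numeral_2_eq_2)
  have "a * qcnj a - b * qcnj b = 0" using X unfolding null_vec_def herm1 a_b_c_d_def by simp
  then have "R (nsq a) = R (nsq b)" by (simp add: mult_cnj)
  then have Nab: "nsq a = nsq b" by (simp add: R_inj)
  have Nb: "nsq b \<noteq> 0" using b0 nsq_0_iff by simp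
  have cd: "c * qcnj a = d * qcnj b" using W unfolding herm1 a_b_c_d_def by simp
  define l where "l = d * qinv b"
  have "c = c * (qcnj a * a) * R (1 / nsq b)"
    using Nb Nab by (simp add: cnj_mult_self R_mult mult.assoc)
  also have "\<dots> = d * qcnj b * a * R (1 / nsq b)" using cd by (simp add: mult.assoc[symmetric])
  also have "\<dots> = l * a" unfolding l_def qinv_def
    by (metis R_comm mult.assoc)
  finally have 1: "W 1 = l * X 1" using a_b_c_d_def by simp
  have 2: "W 2 = l * X 2" using qinv_l[OF b0] a_b_c_d_def l_def by (simp add: mult.assoc)
  show ?thesis
  proof (intro exI[of _ l] ballI)
    fix i :: nat assume "i \<in> {1..1+1}"
    then have "i = 1 \<or> i = 2" by auto
    then show "W i = l * X i" using 1 2 by auto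
  qed
qed

lemma angle_iff: "angle_real_line q = pi / 2 \<longleftrightarrow> qre q = 0"
proof -
  have qn: "qnorm q = sqrt (nsq q)" unfolding qnorm_def nsq_def by simp
  have ge: "\<bar>qre q\<bar> \<le> qnorm q" unfolding qn nsq_def
    by (rule real_le_rsqrt) (simp add: power2_abs)
  show ?thesis
  proof (cases "qnorm q = 0")
    case True
    then have "nsq q = 0" using qn by simp
    then have "q = 0" using nsq_0_iff by simp
    then show ?thesis unfolding angle_real_line_def by simp
  next
    case False
    then have pos: "qnorm q > 0" using ge by linarith
    have y: "\<bar>\<bar>qre q\<bar> / qnorm q\<bar> \<le> 1" using ge pos by simp
    have "angle_real_line q = pi / 2 \<longleftrightarrow> arccos (\<bar>qre q\<bar> / qnorm q) = arccos 0"
      unfolding angle_real_line_def by simp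
    also have "\<dots> \<longleftrightarrow> \<bar>qre q\<bar> / qnorm q = 0" using y by (intro arccos_eq_iff) simp
    also have "\<dots> \<longleftrightarrow> qre q = 0" using pos by simp
    finally show ?thesis .
  qed
qed

lemma G:
  assumes hb: "hline_basis n u v"
    and x: "\<forall>i\<in>{1..n+1}. x i = a * u i + b * v i"
    and y: "\<forall>i\<in>{1..n+1}. y i = c * u i + d * v i"
  shows "herm n x y = a * qcnj c - b * qcnj d"
proof -
  have "herm n x y = herm n (vlin a u b v) (vlin c u d v)"
    using herm_cong_left[of n x "vlin a u b v" y] herm_cong_right[of n y "vlin c u d v" "vlin a u b v"] x y
    unfolding vlin_def by simp
  also have "\<dots> = a * qcnj c - b * qcnj d"
    using hb herm_conj[of n v u] unfolding hline_basis_def herm_lin_left herm_lin_right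
    by simp
  finally show ?thesis .
qed


lemma half: "R (1/2) * a + R (1/2) * a = a"
  by (rule quat_eqI) simp_all

lemma forward:
  assumes nx: "null_vec n x1" "null_vec n x2" "null_vec n x3"
    and ns: "\<not> same_line n x1 x2"
    and hb: "hline_basis n u v" and s1: "in_lspan n u v x1" and s2: "in_lspan n u v x2" and s3: "in_lspan n u v x3"
  shows "qre (triple_product n x1 x2 x3) = 0"
proof -
  obtain a1 b1 where e1: "\<forall>i\<in>{1..n+1}. x1 i = a1 * u i + b1 * v i" using s1 in_lspan_def by blast
  obtain a2 b2 where e2: "\<forall>i\<in>{1..n+1}. x2 i = a2 * u i + b2 * v i" using s2 in_lspan_def by blast
  obtain a3 b3 where e3: "\<forall>i\<in>{1..n+1}. x3 i = a3 * u i + b3 * v i" using s3 in_lspan_def by blast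
  define X1 where "X1 = (\<lambda>i::nat. if i = 1 then a1 else b1)"
  define X2 where "X2 = (\<lambda>i::nat. if i = 1 then a2 else b2)"
  define X3 where "X3 = (\<lambda>i::nat. if i = 1 then a3 else b3)"
  have H: "herm n x y = herm 1 X Y" if "\<forall>i\<in>{1..n+1}. x i = a * u i + b * v i"
     "\<forall>i\<in>{1..n+1}. y i = c * u i + d * v i" "X = (\<lambda>i::nat. if i = 1 then a else b)"
     "Y = (\<lambda>i::nat. if i = 1 then c else d)" for x y X Y a b c d
    using G[OF hb that(1,2)] that(3,4) unfolding herm1 by simp
  have nz: "nonzero_vec 1 X" if "null_vec n x" "\<forall>i\<in>{1..n+1}. x i = a * u i + b * v i"
     "X = (\<lambda>i::nat. if i = 1 then a else b)" for x X a b
  proof (rule ccontr)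
    assume "\<not> nonzero_vec 1 X"
    then have "X 1 = 0" "X 2 = 0" unfolding nonzero_vec_def by auto
    then have "a = 0" "b = 0" using that(3) by auto
    then show False using that(1,2) unfolding null_vec_def nonzero_vec_def by auto
  qed
  have NX: "null_vec 1 X" if "null_vec n x" "\<forall>i\<in>{1..n+1}. x i = a * u i + b * v i"
     "X = (\<lambda>i::nat. if i = 1 then a else b)" for x X a b
    using nz[OF that] H[OF that(2) that(2) that(3) that(3)] that(1) unfolding null_vec_def by simp
  have N1: "null_vec 1 X1" "null_vec 1 X2" "null_vec 1 X3"
    using NX[OF nx(1) e1 X1_def] NX[OF nx(2) e2 X2_def] NX[OF nx(3) e3 X3_def] by auto
  have nsX: "\<not> same_line 1 X1 X2"
  proof
    assume "same_line 1 X1 X2"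
    then obtain c where c: "\<forall>i\<in>{1..1+1}. X1 i = c * X2 i" unfolding same_line_def by blast
    have "a1 = c * a2" using c[rule_format, of 1] X1_def X2_def by simp
    moreover have "b1 = c * b2" using c[rule_format, of 2] X1_def X2_def by simp
    ultimately have "\<forall>i\<in>{1..n+1}. x1 i = c * x2 i" using e1 e2 by (simp add: algebra_simps)
    then show False using ns same_line_def by blast
  qed
  have T: "triple_product n x1 x2 x3 = triple_product 1 X1 X2 X3"
    unfolding triple_product_def using H[OF e1 e2 X1_def X2_def] H[OF e2 e3 X2_def X3_def] H[OF e3 e1 X3_def X1_def]
    by simp
  define h where "h = herm 1 X1 X2"
  have h0: "h \<noteq> 0" using L2[OF N1(1,2) nsX] h_def by simp
  define N where "N = nsq h"
  have N0: "N \<noteq> 0" using h0 nsq_0_iff N_def by simp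
  define w where "w = vlin (R N) X3 1 (vlin (-(herm 1 X3 X2 * herm 1 X2 X1)) X1 (-(herm 1 X3 X1 * herm 1 X1 X2)) X2)"
  have n11: "herm 1 X1 X1 = 0" "herm 1 X2 X2 = 0" "herm 1 X3 X3 = 0" using N1 null_vec_def by auto
  note P = proj[OF n11 N_def[unfolded h_def] w_def]
  obtain l where l: "\<forall>i\<in>{1..1+1}. w i = l * X1 i" using L3[OF N1(1) P(1)] by blast
  have "herm 1 w X2 = herm 1 (\<lambda>i. l * X1 i) X2" using herm_cong_left[OF l] .
  then have "l * h = 0" using P(2) herm_smul_left h_def by simp
  then have "l = 0" using h0 no_zd by blast
  then have "herm 1 w w = herm 1 (\<lambda>i. 0) w" using herm_cong_left[OF l] by simp
  then have "herm 1 w w = 0" using herm_zero_left by simp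
  then have "-2 * N * qre (triple_product 1 X1 X2 X3) = 0" using P(3) by simp
  then show ?thesis using T N0 by simp
qed


lemma backward:
  assumes nx: "null_vec n x1" "null_vec n x2" "null_vec n x3"
    and ns: "\<not> same_line n x1 x2"
    and re0: "qre (triple_product n x1 x2 x3) = 0"
  shows "\<exists>u v. hline_basis n u v \<and> in_lspan n u v x1 \<and> in_lspan n u v x2 \<and> in_lspan n u v x3"
proof -
  define h where "h = herm n x1 x2"
  have h0: "h \<noteq> 0" using L2[OF nx(1,2) ns] h_def by simp
  define N where "N = nsq h"
  have N0: "N \<noteq> 0" using h0 nsq_0_iff N_def by simp
  define p where "p = herm n x3 x2 * herm n x2 x1"
  define q where "q = herm n x3 x1 * herm n x1 x2"
  define w where "w = vlin (R N) x3 1 (vlin (-p) x1 (-q) x2)"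
  have nn: "herm n x1 x1 = 0" "herm n x2 x2 = 0" "herm n x3 x3 = 0" using nx null_vec_def by auto
  note P = proj[OF nn N_def[unfolded h_def] w_def[unfolded p_def q_def]]
  have "herm n w w = 0" using herm_self_real[of n w] P(3) re0 by simp
  then obtain l where l: "\<forall>i\<in>{1..n+1}. w i = l * x1 i" using L1[OF nx(1) P(1)] by blast
  have "herm n w x2 = herm n (\<lambda>i. l * x1 i) x2" using herm_cong_left[OF l] .
  then have "l * h = 0" using P(2) herm_smul_left h_def by simp
  then have "l = 0" using h0 no_zd by blast
  then have w0: "\<forall>i\<in>{1..n+1}. w i = 0" using l by simp
  define P' Q' where "P' = R (1 / N) * p" "Q' = R (1 / N) * q"
  have e3: "x3 i = P' * x1 i + Q' * x2 i" if "i \<in> {1..n+1}" for i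
  proof -
    have "R N * x3 i = p * x1 i + q * x2 i" using w0 that unfolding w_def vlin_def
      by (simp add: algebra_simps eq_neg_iff_add_eq_0)
    then have E: "R (1 / N) * (R N * x3 i) = R (1 / N) * (p * x1 i + q * x2 i)" by simp
    have "x3 i = (R (1/N) * R N) * x3 i" using N0 by (simp add: R_mult)
    also have "\<dots> = R (1 / N) * (p * x1 i + q * x2 i)" using E by (simp only: mult.assoc)
    also have "\<dots> = P' * x1 i + Q' * x2 i" unfolding P'_Q'_def by (simp only: distrib_left mult.assoc)
    finally show ?thesis .
  qed
  define c where "c = R (1 / (2 * N)) * h"
  have c0: "c \<noteq> 0" using h0 N0 no_zd R_eq_0 c_def by fastforce
  have k1: "h * qcnj c = R (1/2)" unfolding c_def cnj_mult cnj_R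
    using N0 by (simp add: mult.assoc[symmetric] mult_cnj N_def[symmetric] R_mult)
  have k2: "c * qcnj h = R (1/2)" unfolding c_def
    using N0 by (simp add: mult.assoc mult_cnj N_def[symmetric] R_mult)
  define u where "u = vlin 1 x1 c x2"
  define v where "v = vlin 1 x1 (-c) x2"
  have h21: "herm n x2 x1 = qcnj h" using herm_conj h_def by metis
  have "herm n u u = h * qcnj c + c * qcnj h"
    unfolding u_def herm_lin_left herm_lin_right using nn h21 h_def by simp
  then have uu: "herm n u u = 1" using k1 k2 by (simp add: R_add)
  have "herm n v v = - (h * qcnj c) - c * qcnj h"
    unfolding v_def herm_lin_left herm_lin_right using nn h21 h_def by (simp add: cnj_minus)
  moreover have "- R (1/2) - R (1 / 2) = (- 1 :: quat)" by (rule quat_eqI) simp_all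
  ultimately have vv: "herm n v v = - 1" using k1 k2 by simp
  have "herm n u v = - (h * qcnj c) + c * qcnj h"
    unfolding u_def v_def herm_lin_left herm_lin_right using nn h21 h_def by (simp add: cnj_minus)
  then have uv: "herm n u v = 0" using k1 k2 by simp
  have hb: "hline_basis n u v" using uu vv uv hline_basis_def by simp
  define d where "d = R (1/2) * qinv c"
  have dc: "d * c + d * c = 1" unfolding d_def using qinv_l[OF c0] half[of 1]
    by (simp add: mult.assoc)
  have f1: "x1 i = R (1/2) * u i + R (1/2) * v i" for i
    unfolding u_def v_def vlin_def using half[of "x1 i"] by (simp add: algebra_simps)
  have f2: "x2 i = d * u i + (- d) * v i" for i
  proof -
    have "d * u i + (- d) * v i = (d * c + d * c) * x2 i"
      unfolding u_def v_def vlin_def by (simp add: algebra_simps)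
    then show ?thesis using dc by simp
  qed
  have f3: "x3 i = (P' * R (1/2) + Q' * d) * u i + (P' * R (1/2) - Q' * d) * v i" if "i \<in> {1..n+1}" for i
    using e3[OF that] f1[of i] f2[of i] by (simp add: algebra_simps)
  have "in_lspan n u v x1" unfolding in_lspan_def using f1 by blast
  moreover have "in_lspan n u v x2" unfolding in_lspan_def using f2 by blast
  moreover have "in_lspan n u v x3" unfolding in_lspan_def using f3 by blast
  ultimately show ?thesis using hb by blast
qed

theorem theorem3p6:
  fixes n :: nat and x1 x2 x3 :: "nat \<Rightarrow> quat"
  assumes "n \<ge> 1"
    and "null_vec n x1" "null_vec n x2" "null_vec n x3"
    and "\<not> same_line n x1 x2" "\<not> same_line n x2 x3" "\<not> same_line n x1 x3"
  shows "(\<exists>u v. hline_basis n u v \<and> in_lspan n u v x1 \<and> in_lspan n u v x2 \<and> in_lspan n u v x3)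
     \<longleftrightarrow> quat_angular_inv n x1 x2 x3 = pi / 2"
  unfolding quat_angular_inv_def angle_iff
  using forward[OF assms(2,3,4,5)] backward[OF assms(2,3,4,5)] by blast

end
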